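(* Let $X$ be a finite $T_0$ space and $\mathbb{B}(X)=\{U_x\mid x\in X\}$. If $\mathcal{U}\in Cov(X)$ satisfies $\mathcal{U}\ge_C\mathbb{B}(X)$, then $\mathcal{U}$ and $\mathbb{B}(X)$, regarded as finite $T_0$ spaces (posets under inclusion), are homotopy equivalent.
   Context: For a finite topological space $X$ and $x\in X$, $U_x$ is the intersection of all open sets containing $x$. Finite $T_0$ spaces are identified with finite posets (via $x\le y$ iff $U_x\subseteq U_y$; open sets are down-sets), continuous maps with order-preserving maps. Any finite family of sets ordered by inclusion is regarded as a finite poset, hence a finite $T_0$ space. An open cover $\mathcal{U}$ of $X$ is basis-like if whenever $x\in U\cap V$ with $U,V\in\mathcal{U}$ there is $W\in\mathcal{U}$ with $x\in W\subseteq U\cap V$. For a finite $T_0$ space $X$, $Cov(X)$ is the set of all finite basis-like open covers of $X$. For $\mathcal{U},\mathcal{V}\in Cov(X)$ we write $\mathcal{U}\ge_C\mathcal{V}$ iff $\mathcal{U}$ refines $\mathcal{V}$ and there exists a continuous (i.e. inclusion-order-preserving) map $p_{\mathcal{V},\mathcal{U}}:\mathcal{U}\to\mathcal{V}$ with $U\subseteq p_{\mathcal{V},\mathcal{U}}(U)$ for every $U\in\mathcal{U}$. *)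

theory Defs
  imports "HOL-Analysis.Analysis"
begin

definition minimal_open :: "'a topology \<Rightarrow> 'a \<Rightarrow> 'a set" where
  "minimal_open T x = \<Inter> {V. openin T V \<and> x \<in> V}"

definition minimal_basis :: "'a topology \<Rightarrow> 'a set set" where
  "minimal_basis T = {minimal_open T x | x. x \<in> topspace T}"

definition basis_like :: "'a topology \<Rightarrow> 'a set set \<Rightarrow> bool" where
  "basis_like T \<U> \<longleftrightarrow>
     (\<forall>U\<in>\<U>. openin T U) \<and> \<Union>\<U> = topspace T \<and>
     (\<forall>U\<in>\<U>. \<forall>V\<in>\<U>. \<forall>x\<in>U \<inter> V. \<exists>W\<in>\<U>. x \<in> W \<and> W \<subseteq> U \<inter> V)"

definition Cov :: "'a topology \<Rightarrow> 'a set set set" where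
  "Cov T = {\<U>. finite \<U> \<and> basis_like T \<U>}"

definition refines :: "'a set set \<Rightarrow> 'a set set \<Rightarrow> bool" where
  "refines \<U> \<V> \<longleftrightarrow> (\<forall>U\<in>\<U>. \<exists>V\<in>\<V>. U \<subseteq> V)"

text \<open>U >=_C V: U refines V and there is an inclusion-preserving
  (i.e. continuous) map p : U -> V with U \<subseteq> p U.\<close>
definition cov_ge :: "'a set set \<Rightarrow> 'a set set \<Rightarrow> bool" where
  "cov_ge \<U> \<V> \<longleftrightarrow> refines \<U> \<V> \<and>
     (\<exists>p. p ` \<U> \<subseteq> \<V> \<and> (\<forall>U\<in>\<U>. \<forall>U'\<in>\<U>. U \<subseteq> U' \<longrightarrow> p U \<subseteq> p U') \<and>
          (\<forall>U\<in>\<U>. U \<subseteq> p U))"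

text \<open>A family of sets regarded as a finite T0 space: the poset under
  inclusion with the Alexandrov topology whose open sets are the down-sets.\<close>
definition family_topology :: "'a set set \<Rightarrow> 'a set topology" where
  "family_topology \<A> = topology (\<lambda>S. S \<subseteq> \<A> \<and> (\<forall>A\<in>S. \<forall>B\<in>\<A>. B \<subseteq> A \<longrightarrow> B \<in> S))"

lemma istopology_family:
  "istopology (\<lambda>S. S \<subseteq> \<A> \<and> (\<forall>A\<in>S. \<forall>B\<in>\<A>. B \<subseteq> A \<longrightarrow> B \<in> S))"
  unfolding istopology_def by blast

lemma openin_family_topology:
  "openin (family_topology \<A>) S \<longleftrightarrow> S \<subseteq> \<A> \<and> (\<forall>A\<in>S. \<forall>B\<in>\<A>. B \<subseteq> A \<longrightarrow> B \<in> S)"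
  unfolding family_topology_def
  by (simp add: topology_inverse'[OF istopology_family])

lemma topspace_family_topology: "topspace (family_topology \<A>) = \<A>"
  unfolding topspace_def openin_family_topology by blast

end

theory Submission
  imports Defs
begin

lemma fam_cont:
  assumes "f ` A \<subseteq> B" "\<forall>a\<in>A. \<forall>a'\<in>A. a \<subseteq> a' \<longrightarrow> f a \<subseteq> f a'"
  shows "continuous_map (family_topology A) (family_topology B) f"
  using assms unfolding continuous_map_def topspace_family_topology openin_family_topology
  by blast

lemma fam_homotopic:
  assumes f: "f ` A \<subseteq> A" "\<forall>a\<in>A. \<forall>a'\<in>A. a \<subseteq> a' \<longrightarrow> f a \<subseteq> f a'"
    and g: "g ` A \<subseteq> A" "\<forall>a\<in>A. \<forall>a'\<in>A. a \<subseteq> a' \<longrightarrow> g a \<subseteq> g a'"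
    and le: "\<forall>a\<in>A. f a \<subseteq> g a"
  shows "homotopic_with (\<lambda>x. True) (family_topology A) (family_topology A) f g"
proof -
  define h where "h = (\<lambda>(t::real,x). if t = 1 then g x else f x)"
  have "continuous_map (prod_topology (top_of_set {0..1}) (family_topology A)) (family_topology A) h"
    unfolding continuous_map_def
  proof (intro conjI allI impI)
    show "h \<in> topspace (prod_topology (top_of_set {0..1}) (family_topology A)) \<rightarrow> topspace (family_topology A)"
      using f g by (auto simp: h_def topspace_family_topology image_subset_iff)
  next
    fix S assume S: "openin (family_topology A) S"
    let ?F = "{x\<in>A. f x \<in> S}" and ?G = "{x\<in>A. g x \<in> S}"
    have oF: "openin (family_topology A) ?F" using S f
      unfolding openin_family_topology by blast
    have oG: "openin (family_topology A) ?G" using S g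
      unfolding openin_family_topology by blast
    have o1: "openin (top_of_set {0..1::real}) {0..<1}"
    proof -
      have "{0..<1::real} = {0..1} \<inter> {..<1}" by auto
      then show ?thesis by (metis openin_open_Int open_lessThan Int_commute)
    qed
    have o2: "openin (top_of_set {0..1::real}) {0..1}" by simp
    have eq: "{x \<in> topspace (prod_topology (top_of_set {0..1}) (family_topology A)). h x \<in> S}
       = {0..<1} \<times> ?F \<union> {0..1} \<times> ?G"
    proof -
      have GF: "?G \<subseteq> ?F" using S le unfolding openin_family_topology using f by blast
      show ?thesis using GF
        by (auto simp: h_def topspace_family_topology split: if_splits)
    qed
    show "openin (prod_topology (top_of_set {0..1}) (family_topology A))
       {x \<in> topspace (prod_topology (top_of_set {0..1}) (family_topology A)). h x \<in> S}"
      unfolding eq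
      by (intro openin_Un openin_prod_Times_iff[THEN iffD2] disjI2 conjI o1 o2 oF oG)
  qed
  moreover have "\<forall>x. h (0, x) = f x" "\<forall>x. h (1, x) = g x" by (auto simp: h_def)
  ultimately show ?thesis unfolding homotopic_with_def by blast
qed

theorem proposition3p3:
  fixes X :: "'a topology" and \<U> :: "'a set set"
  assumes "finite (topspace X)"
    and "t0_space X"
    and "\<U> \<in> Cov X"
    and "cov_ge \<U> (minimal_basis X)"
  shows "family_topology \<U> homotopy_equivalent_space family_topology (minimal_basis X)"
proof -
  let ?B = "minimal_basis X"
  have finU: "finite \<U>" and bl: "basis_like X \<U>" using assms(3) by (auto simp: Cov_def)
  obtain p where p: "p ` \<U> \<subseteq> ?B" "\<forall>U\<in>\<U>. \<forall>U'\<in>\<U>. U \<subseteq> U' \<longrightarrow> p U \<subseteq> p U'"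
      "\<forall>U\<in>\<U>. U \<subseteq> p U"
  proof -
    from assms(4) have "\<exists>p. p ` \<U> \<subseteq> ?B \<and> (\<forall>U\<in>\<U>. \<forall>U'\<in>\<U>. U \<subseteq> U' \<longrightarrow> p U \<subseteq> p U') \<and> (\<forall>U\<in>\<U>. U \<subseteq> p U)"
      unfolding cov_ge_def by (elim conjE)
    then obtain p where "p ` \<U> \<subseteq> ?B \<and> (\<forall>U\<in>\<U>. \<forall>U'\<in>\<U>. U \<subseteq> U' \<longrightarrow> p U \<subseteq> p U') \<and> (\<forall>U\<in>\<U>. U \<subseteq> p U)"
      by (elim exE)
    then show thesis using that by (elim conjE)
  qed
  have opU: "\<And>U. U \<in> \<U> \<Longrightarrow> openin X U" and covU: "\<Union>\<U> = topspace X"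
    and blU: "\<And>U V x. U \<in> \<U> \<Longrightarrow> V \<in> \<U> \<Longrightarrow> x \<in> U \<Longrightarrow> x \<in> V \<Longrightarrow> \<exists>W\<in>\<U>. x \<in> W \<and> W \<subseteq> U \<inter> V"
    using bl unfolding basis_like_def by blast+
  have mo_sub: "minimal_open X x \<subseteq> V" if "openin X V" "x \<in> V" for x V
    using that unfolding minimal_open_def by blast
  have mo_in: "x \<in> minimal_open X x" if "x \<in> topspace X" for x
    using that unfolding minimal_open_def by blast
  have Wex: "\<exists>W\<in>\<U>. x \<in> W \<and> (\<forall>V\<in>\<U>. x \<in> V \<longrightarrow> W \<subseteq> V)" if x: "x \<in> topspace X" for x
  proof -
    have ne: "{W\<in>\<U>. x \<in> W} \<noteq> {}" using x covU by blast
    have fin: "finite {W\<in>\<U>. x \<in> W}" using finU by simp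
    obtain W where W: "W \<in> {W\<in>\<U>. x \<in> W}" and min: "\<forall>V\<in>{W\<in>\<U>. x \<in> W}. V \<subseteq> W \<longrightarrow> V = W"
      using finite_has_minimal[OF fin ne] by blast
    show ?thesis
    proof (intro bexI conjI ballI impI)
      fix V assume V: "V \<in> \<U>" "x \<in> V"
      then obtain W' where "W' \<in> \<U>" "x \<in> W'" "W' \<subseteq> W \<inter> V" using blU W by blast
      with min have "W' = W" by blast
      then show "W \<subseteq> V" using \<open>W' \<subseteq> W \<inter> V\<close> by blast
    qed (use W in auto)
  qed
  define w where "w x = (SOME W. W \<in> \<U> \<and> x \<in> W \<and> (\<forall>V\<in>\<U>. x \<in> V \<longrightarrow> W \<subseteq> V))" for x
  have w: "w x \<in> \<U> \<and> x \<in> w x \<and> (\<forall>V\<in>\<U>. x \<in> V \<longrightarrow> w x \<subseteq> V)" if "x \<in> topspace X" for x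
    unfolding w_def by (rule someI_ex) (use Wex[OF that] in blast)
  define c where "c B = (SOME x. x \<in> topspace X \<and> B = minimal_open X x)" for B
  have c: "c B \<in> topspace X \<and> B = minimal_open X (c B)" if "B \<in> ?B" for B
    unfolding c_def by (rule someI_ex) (use that in \<open>auto simp: minimal_basis_def\<close>)
  define q where "q B = w (c B)" for B
  have wU: "minimal_open X x \<subseteq> w x" if "x \<in> topspace X" for x
    using w[OF that] opU mo_sub by blast
  have q1: "q ` ?B \<subseteq> \<U>" using c w unfolding q_def by blast
  have q2: "\<forall>a\<in>?B. \<forall>a'\<in>?B. a \<subseteq> a' \<longrightarrow> q a \<subseteq> q a'"
  proof (intro ballI impI)
    fix a a' assume a: "a \<in> ?B" "a' \<in> ?B" "a \<subseteq> a'"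
    have "c a \<in> a" using c[OF a(1)] mo_in by metis
    then have "c a \<in> w (c a')" using a c[OF a(2)] wU by blast
    then show "q a \<subseteq> q a'" unfolding q_def using w c a by blast
  qed
  have q3: "\<forall>a\<in>?B. a \<subseteq> q a" unfolding q_def using c wU by metis
  show ?thesis unfolding homotopy_equivalent_space_def
  proof (intro exI conjI)
    show "continuous_map (family_topology \<U>) (family_topology ?B) p" using fam_cont p by blast
    show "continuous_map (family_topology ?B) (family_topology \<U>) q" using fam_cont q1 q2 by blast
    have "homotopic_with (\<lambda>x. True) (family_topology \<U>) (family_topology \<U>) id (q \<circ> p)"
    proof (rule fam_homotopic)
      show "\<forall>a\<in>\<U>. id a \<subseteq> (q \<circ> p) a" using p q3 by fastforce
      show "(q \<circ> p) ` \<U> \<subseteq> \<U>" using p(1) q1 unfolding image_subset_iff comp_def by blast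
      show "\<forall>a\<in>\<U>. \<forall>a'\<in>\<U>. a \<subseteq> a' \<longrightarrow> (q \<circ> p) a \<subseteq> (q \<circ> p) a'" using p q2 by (simp add: image_subset_iff)
    qed auto
    then show "homotopic_with (\<lambda>x. True) (family_topology \<U>) (family_topology \<U>) (q \<circ> p) id"
      by (rule homotopic_with_sym[THEN iffD1])
    have "homotopic_with (\<lambda>x. True) (family_topology ?B) (family_topology ?B) id (p \<circ> q)"
    proof (rule fam_homotopic)
      show "\<forall>a\<in>?B. id a \<subseteq> (p \<circ> q) a" using p q3 q1 by fastforce
      show "(p \<circ> q) ` ?B \<subseteq> ?B" using p(1) q1 unfolding image_subset_iff comp_def by blast
      show "\<forall>a\<in>?B. \<forall>a'\<in>?B. a \<subseteq> a' \<longrightarrow> (p \<circ> q) a \<subseteq> (p \<circ> q) a'" using p q2 q1 by (simp add: image_subset_iff)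
    qed auto
    then show "homotopic_with (\<lambda>x. True) (family_topology ?B) (family_topology ?B) (p \<circ> q) id"
      by (rule homotopic_with_sym[THEN iffD1])
  qed
qed

end
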